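(* Let $Y$ be an unbounded connected graph and suppose at least one of the following holds: (a) $Y$ has linear growth; (b) $Y$ is uniformly locally finite and quasi-isometric to a tree with finitely many ends. Then $Y$ is narrow.
   Context: $Y$ carries the path metric on its vertex set with edges of length 1; $B_Y(y,r)$ is the set of vertices at distance at most $r$ from $y$. Linear growth: there exist $C\ge1$ and a vertex $y_0$ with $|B_Y(y_0,n)|\le Cn$ for all $n\in\mathbb N$. A vertex subset $Z$ is $\mu$-coarsely connected ($\mu\ge1$) if any two points of $Z$ are joined by a finite chain of points of $Z$ with consecutive distances at most $\mu$. $Y$ is narrow if for each $\mu\ge1$ there is $L(\mu)\ge1$ such that whenever $Y_1,\dots,Y_{L(\mu)+1}$ are unbounded $\mu$-coarsely connected vertex subsets, some $Y_i\cap Y_j\ne\emptyset$ with $i\ne j$. *)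

theory Defs
  imports Complex_Main
begin

text \<open>A graph is given by its vertex type (all elements of the type are vertices)
  and a symmetric adjacency relation E.\<close>

definition is_walk :: "('a \<Rightarrow> 'a \<Rightarrow> bool) \<Rightarrow> 'a list \<Rightarrow> bool" where
  "is_walk E xs \<longleftrightarrow> xs \<noteq> [] \<and> (\<forall>i. Suc i < length xs \<longrightarrow> E (xs ! i) (xs ! Suc i))"

definition graph_connected :: "('a \<Rightarrow> 'a \<Rightarrow> bool) \<Rightarrow> bool" where
  "graph_connected E \<longleftrightarrow> (\<forall>x y. \<exists>xs. is_walk E xs \<and> hd xs = x \<and> last xs = y)"

text \<open>Path metric (edges of length 1); meaningful for connected graphs.\<close>
definition gdist :: "('a \<Rightarrow> 'a \<Rightarrow> bool) \<Rightarrow> 'a \<Rightarrow> 'a \<Rightarrow> nat" where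
  "gdist E x y = (LEAST n. \<exists>xs. is_walk E xs \<and> hd xs = x \<and> last xs = y \<and> length xs = Suc n)"

definition gball :: "('a \<Rightarrow> 'a \<Rightarrow> bool) \<Rightarrow> 'a \<Rightarrow> nat \<Rightarrow> 'a set" where
  "gball E y r = {z. gdist E y z \<le> r}"

definition bounded_set :: "('a \<Rightarrow> 'a \<Rightarrow> bool) \<Rightarrow> 'a set \<Rightarrow> bool" where
  "bounded_set E Z \<longleftrightarrow> (\<exists>r. \<forall>x\<in>Z. \<forall>y\<in>Z. gdist E x y \<le> r)"

definition graph_unbounded :: "('a \<Rightarrow> 'a \<Rightarrow> bool) \<Rightarrow> bool" where
  "graph_unbounded E \<longleftrightarrow> \<not> bounded_set E UNIV"

text \<open>Linear growth; \<open>\<nat>\<close> is read as the positive integers (for n = 0 the bound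
  C*0 = 0 is impossible since y0 is in its own ball).\<close>
definition linear_growth :: "('a \<Rightarrow> 'a \<Rightarrow> bool) \<Rightarrow> bool" where
  "linear_growth E \<longleftrightarrow> (\<exists>C::real. C \<ge> 1 \<and> (\<exists>y0. \<forall>n::nat. n \<ge> 1 \<longrightarrow>
      finite (gball E y0 n) \<and> real (card (gball E y0 n)) \<le> C * real n))"

definition coarsely_connected :: "('a \<Rightarrow> 'a \<Rightarrow> bool) \<Rightarrow> real \<Rightarrow> 'a set \<Rightarrow> bool" where
  "coarsely_connected E \<mu> Z \<longleftrightarrow> (\<forall>x\<in>Z. \<forall>y\<in>Z. \<exists>xs. xs \<noteq> [] \<and> hd xs = x \<and> last xs = y \<and>
      set xs \<subseteq> Z \<and> (\<forall>i. Suc i < length xs \<longrightarrow> real (gdist E (xs ! i) (xs ! Suc i)) \<le> \<mu>))"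

definition narrow :: "('a \<Rightarrow> 'a \<Rightarrow> bool) \<Rightarrow> bool" where
  "narrow E \<longleftrightarrow> (\<forall>\<mu>::real. \<mu> \<ge> 1 \<longrightarrow> (\<exists>L::nat. L \<ge> 1 \<and>
     (\<forall>Ys :: nat \<Rightarrow> 'a set.
        (\<forall>i \<le> L. \<not> bounded_set E (Ys i) \<and> coarsely_connected E \<mu> (Ys i)) \<longrightarrow>
        (\<exists>i \<le> L. \<exists>j \<le> L. i \<noteq> j \<and> Ys i \<inter> Ys j \<noteq> {}))))"

definition unif_locally_finite :: "('a \<Rightarrow> 'a \<Rightarrow> bool) \<Rightarrow> bool" where
  "unif_locally_finite E \<longleftrightarrow> (\<exists>N::nat. \<forall>v. finite {w. E v w} \<and> card {w. E v w} \<le> N)"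

definition has_cycle :: "('a \<Rightarrow> 'a \<Rightarrow> bool) \<Rightarrow> bool" where
  "has_cycle E \<longleftrightarrow> (\<exists>xs. is_walk E xs \<and> length xs \<ge> 3 \<and> distinct xs \<and> E (last xs) (hd xs))"

definition is_tree :: "('a \<Rightarrow> 'a \<Rightarrow> bool) \<Rightarrow> bool" where
  "is_tree T \<longleftrightarrow> symp T \<and> (\<forall>x. \<not> T x x) \<and> graph_connected T \<and> \<not> has_cycle T"

text \<open>Ends (Halin): equivalence classes of rays, two rays being equivalent if for every
  finite vertex set S they have tails in the same component of G - S.\<close>
definition is_ray :: "('a \<Rightarrow> 'a \<Rightarrow> bool) \<Rightarrow> (nat \<Rightarrow> 'a) \<Rightarrow> bool" where
  "is_ray G r \<longleftrightarrow> inj r \<and> (\<forall>i. G (r i) (r (Suc i)))"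

definition end_equiv :: "('a \<Rightarrow> 'a \<Rightarrow> bool) \<Rightarrow> (nat \<Rightarrow> 'a) \<Rightarrow> (nat \<Rightarrow> 'a) \<Rightarrow> bool" where
  "end_equiv G r s \<longleftrightarrow> (\<forall>S. finite S \<longrightarrow> (\<exists>n.
      (\<forall>k\<ge>n. r k \<notin> S \<and> s k \<notin> S) \<and>
      (\<exists>xs. is_walk G xs \<and> hd xs = r n \<and> last xs = s n \<and> set xs \<inter> S = {})))"

definition graph_ends :: "('a \<Rightarrow> 'a \<Rightarrow> bool) \<Rightarrow> (nat \<Rightarrow> 'a) set set" where
  "graph_ends G = {r. is_ray G r} // {(r, s). is_ray G r \<and> is_ray G s \<and> end_equiv G r s}"

definition quasi_isometric :: "('a \<Rightarrow> 'a \<Rightarrow> bool) \<Rightarrow> ('b \<Rightarrow> 'b \<Rightarrow> bool) \<Rightarrow> bool" where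
  "quasi_isometric E T \<longleftrightarrow> (\<exists>f :: 'a \<Rightarrow> 'b. \<exists>K::real. \<exists>C::real. K \<ge> 1 \<and> C \<ge> 0 \<and>
     (\<forall>x y. real (gdist E x y) / K - C \<le> real (gdist T (f x) (f y)) \<and>
            real (gdist T (f x) (f y)) \<le> K * real (gdist E x y) + C) \<and>
     (\<forall>t. \<exists>x. real (gdist T t (f x)) \<le> C))"

end

theory Submission
  imports Defs
begin


lemma is_walk_Nil[simp]: "\<not> is_walk E []"
  by (simp add: is_walk_def)

lemma is_walk_single[simp]: "is_walk E [x]"
  by (simp add: is_walk_def)

lemma is_walk_Cons2[simp]: "is_walk E (x # y # xs) \<longleftrightarrow> E x y \<and> is_walk E (y # xs)"
proof
  assume "is_walk E (x # y # xs)"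
  then show "E x y \<and> is_walk E (y # xs)"
    unfolding is_walk_def by (metis Suc_less_eq length_Cons nth_Cons_0 nth_Cons_Suc zero_less_Suc list.simps(3))
next
  assume H: "E x y \<and> is_walk E (y # xs)"
  show "is_walk E (x # y # xs)"
    unfolding is_walk_def
  proof (intro conjI allI impI)
    fix i assume "Suc i < length (x # y # xs)"
    then show "E ((x # y # xs) ! i) ((x # y # xs) ! Suc i)"
      using H unfolding is_walk_def by (cases i) auto
  qed simp
qed

lemma is_walk_ConsD: "is_walk E (x # xs) \<Longrightarrow> xs \<noteq> [] \<Longrightarrow> is_walk E xs"
  by (cases xs) auto

lemma is_walk_append:
  "is_walk E xs \<Longrightarrow> is_walk E ys \<Longrightarrow> last xs = hd ys \<Longrightarrow> is_walk E (xs @ tl ys)"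
proof (induction xs)
  case Nil then show ?case by simp
next
  case (Cons x xs)
  show ?case
  proof (cases xs)
    case Nil
    then show ?thesis using Cons by (cases ys) auto
  next
    case (Cons z zs)
    with Cons.prems Cons.IH show ?thesis by auto
  qed
qed

lemma set_append_tl: "set (xs @ tl ys) \<subseteq> set xs \<union> set ys"
  by (cases ys) auto

lemma hd_append_tl: "xs \<noteq> [] \<Longrightarrow> hd (xs @ tl ys) = hd xs" by simp

lemma last_append_tl: "xs \<noteq> [] \<Longrightarrow> ys \<noteq> [] \<Longrightarrow> last xs = hd ys \<Longrightarrow> last (xs @ tl ys) = last ys"
  by (cases ys) auto

lemma length_append_tl: "ys \<noteq> [] \<Longrightarrow> length (xs @ tl ys) = length xs + length ys - 1"
  by (cases ys) auto

lemma is_walk_rev: "symp E \<Longrightarrow> is_walk E xs \<Longrightarrow> is_walk E (rev xs)"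
proof (induction xs)
  case Nil then show ?case by simp
next
  case (Cons x xs)
  show ?case
  proof (cases xs)
    case Nil then show ?thesis by simp
  next
    case (Cons z zs)
    with Cons.prems Cons.IH have w: "is_walk E (rev xs)" and e: "E z x"
      by (auto dest: sympD)
    have "is_walk E (rev xs @ tl [z, x])"
      by (rule is_walk_append[OF w]) (use e Cons in auto)
    then show ?thesis using Cons by simp
  qed
qed

lemma is_walk_take: "is_walk E xs \<Longrightarrow> n < length xs \<Longrightarrow> is_walk E (take (Suc n) xs)"
  by (auto simp: is_walk_def)

lemma is_walk_drop: "is_walk E xs \<Longrightarrow> n < length xs \<Longrightarrow> is_walk E (drop n xs)"
  by (auto simp: is_walk_def)

definition prs :: "'a list \<Rightarrow> ('a \<times> 'a) set" where
  "prs xs = set (zip xs (tl xs))"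

lemma prs_single[simp]: "prs [x] = {}" by (simp add: prs_def)
lemma prs_Nil[simp]: "prs [] = {}" by (simp add: prs_def)
lemma prs_Cons2[simp]: "prs (x # y # zs) = insert (x, y) (prs (y # zs))"
  by (simp add: prs_def)

lemma prs_append_suffix: "prs qs \<subseteq> prs (ps @ qs)"
proof (induction ps)
  case Nil then show ?case by simp
next
  case (Cons p ps)
  then show ?case by (cases "ps @ qs") auto
qed

lemma prs_subset: "prs xs \<subseteq> set xs \<times> set xs"
  by (induction xs rule: induct_list012) auto

lemma prs_snoc: "xs \<noteq> [] \<Longrightarrow> prs (xs @ [z]) = insert (last xs, z) (prs xs)"
  by (induction xs rule: induct_list012) auto

lemma is_walk_suffix: "is_walk E (ps @ qs) \<Longrightarrow> qs \<noteq> [] \<Longrightarrow> is_walk E qs"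
  by (induction ps) (auto intro: is_walk_ConsD)

lemma walk_shorten:
  "is_walk E xs \<Longrightarrow> \<exists>ys. is_walk E ys \<and> hd ys = hd xs \<and> last ys = last xs \<and> distinct ys
      \<and> prs ys \<subseteq> prs xs \<and> set ys \<subseteq> set xs"
proof (induction xs)
  case Nil then show ?case by simp
next
  case (Cons x xs)
  show ?case
  proof (cases xs)
    case Nil then show ?thesis by (intro exI[of _ "[x]"]) auto
  next
    case (Cons z zs)
    with Cons.prems have wx: "is_walk E xs" and exz: "E x z" by auto
    from Cons.IH[OF wx] obtain ys where ys: "is_walk E ys" "hd ys = hd xs" "last ys = last xs"
      "distinct ys" "prs ys \<subseteq> prs xs" "set ys \<subseteq> set xs" by blast
    have ysne: "ys \<noteq> []" using ys(1) by auto
    show ?thesis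
    proof (cases "x \<in> set ys")
      case True
      then obtain ps qs where sp: "ys = ps @ x # qs" and "x \<notin> set ps" by (meson split_list_first)
      have w: "is_walk E (x # qs)" using ys(1) sp is_walk_suffix by blast
      have l: "last (x # qs) = last (x # xs)"
        using ys(3) sp Cons by (cases qs) auto
      have p: "prs (x # qs) \<subseteq> prs (x # xs)"
        using prs_append_suffix[of "x # qs" ps] sp ys(5) Cons by auto
      show ?thesis
        by (intro exI[of _ "x # qs"]) (use w l p ys sp in auto)
    next
      case False
      have w: "is_walk E (x # ys)" using ys ysne exz Cons by (cases ys) auto
      have p: "prs (x # ys) \<subseteq> prs (x # xs)"
        using ys ysne Cons by (cases ys) auto
      show ?thesis
        by (intro exI[of _ "x # ys"]) (use w p ys ysne Cons False in auto)
    qed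
  qed
qed

lemma transition:
  assumes "xs \<noteq> []" "\<not> P (hd xs)" "P (last xs)"
  shows "\<exists>j. Suc j < length xs \<and> \<not> P (xs ! j) \<and> P (xs ! Suc j)"
  using assms
proof (induction xs)
  case Nil then show ?case by simp
next
  case (Cons x xs)
  show ?case
  proof (cases xs)
    case Nil then show ?thesis using Cons by simp
  next
    case (Cons z zs)
    show ?thesis
    proof (cases "P z")
      case True then show ?thesis using Cons \<open>\<not> P (hd (x # xs))\<close>
        by (intro exI[of _ 0]) auto
    next
      case False
      then obtain j where "Suc j < length xs" "\<not> P (xs ! j)" "P (xs ! Suc j)"
        using Cons.IH Cons.prems Cons by auto
      then show ?thesis by (intro exI[of _ "Suc j"]) auto
    qed
  qed
qed




locale cgraph =
  fixes G :: "'a \<Rightarrow> 'a \<Rightarrow> bool"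
  assumes sym: "symp G" and conn: "graph_connected G"
begin

lemma geo: "\<exists>xs. is_walk G xs \<and> hd xs = x \<and> last xs = y \<and> length xs = Suc (gdist G x y)"
proof -
  obtain xs where xs: "is_walk G xs" "hd xs = x" "last xs = y"
    using conn unfolding graph_connected_def by blast
  then have "length xs = Suc (length xs - 1)" by (cases xs) auto
  with xs have "\<exists>n xs. is_walk G xs \<and> hd xs = x \<and> last xs = y \<and> length xs = Suc n" by blast
  then show ?thesis unfolding gdist_def by (rule LeastI_ex)
qed

lemma d_le: "is_walk G xs \<Longrightarrow> hd xs = x \<Longrightarrow> last xs = y \<Longrightarrow> gdist G x y \<le> length xs - 1"
proof -
  assume xs: "is_walk G xs" "hd xs = x" "last xs = y"
  then have "length xs = Suc (length xs - 1)" by (cases xs) auto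
  with xs show ?thesis unfolding gdist_def by (intro Least_le) blast
qed

lemma d_refl[simp]: "gdist G x x = 0"
proof -
  have "gdist G x x \<le> length [x] - 1" by (rule d_le) auto
  then show ?thesis by simp
qed

lemma d_zero: "gdist G x y = 0 \<Longrightarrow> x = y"
proof -
  assume "gdist G x y = 0"
  moreover obtain xs where "is_walk G xs" "hd xs = x" "last xs = y" "length xs = Suc (gdist G x y)"
    using geo by blast
  ultimately have "hd xs = x" "last xs = y" "length xs = 1" by auto
  then show ?thesis by (cases xs) auto
qed

lemma d_zero_iff: "gdist G x y = 0 \<longleftrightarrow> x = y"
  using d_zero by auto

lemma d_sym: "gdist G x y = gdist G y x"
proof -
  have *: "gdist G y x \<le> gdist G x y" for x y
  proof -
    obtain xs where xs: "is_walk G xs" "hd xs = x" "last xs = y" "length xs = Suc (gdist G x y)"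
      using geo by blast
    have "is_walk G (rev xs)" using is_walk_rev[OF sym xs(1)] .
    moreover have "xs \<noteq> []" using xs(1) by auto
    ultimately have "gdist G y x \<le> length (rev xs) - 1"
      by (intro d_le) (use xs in \<open>auto simp: hd_rev last_rev\<close>)
    with xs show ?thesis by simp
  qed
  show ?thesis using *[of x y] *[of y x] by simp
qed

lemma d_tri: "gdist G x z \<le> gdist G x y + gdist G y z"
proof -
  obtain xs where xs: "is_walk G xs" "hd xs = x" "last xs = y" "length xs = Suc (gdist G x y)"
    using geo by blast
  obtain ys where ys: "is_walk G ys" "hd ys = y" "last ys = z" "length ys = Suc (gdist G y z)"
    using geo by blast
  have ne: "xs \<noteq> []" "ys \<noteq> []" using xs ys by auto
  have "is_walk G (xs @ tl ys)" by (rule is_walk_append) (use xs ys in auto)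
  moreover have "hd (xs @ tl ys) = x" "last (xs @ tl ys) = z"
    using ne xs ys by (auto simp: last_append_tl)
  ultimately have "gdist G x z \<le> length (xs @ tl ys) - 1" using d_le by blast
  also have "\<dots> = gdist G x y + gdist G y z" using xs ys ne by (simp add: length_append_tl)
  finally show ?thesis .
qed

lemma d_edge: "G x y \<Longrightarrow> gdist G x y \<le> 1"
proof -
  assume "G x y"
  then have "gdist G x y \<le> length [x, y] - 1" by (intro d_le) auto
  then show ?thesis by simp
qed

lemma d_one: "gdist G x y = 1 \<Longrightarrow> G x y"
proof -
  assume "gdist G x y = 1"
  moreover obtain xs where "is_walk G xs" "hd xs = x" "last xs = y" "length xs = Suc (gdist G x y)"
    using geo by blast
  ultimately have "is_walk G xs" "hd xs = x" "last xs = y" "length xs = 2" by auto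
  then show ?thesis by (cases xs; cases "tl xs") auto
qed

lemma geo_pos:
  assumes g: "is_walk G g" "hd g = x" "last g = y" "length g = Suc (gdist G x y)"
    and i: "i \<le> gdist G x y"
  shows "gdist G x (g ! i) = i" "gdist G (g ! i) y = gdist G x y - i"
proof -
  have il: "i < length g" using g i by simp
  have gne: "g \<noteq> []" using g by auto
  have a: "gdist G x (g ! i) \<le> i"
  proof -
    have "is_walk G (take (Suc i) g)" using is_walk_take g(1) il by blast
    moreover have "hd (take (Suc i) g) = x" using g gne by (simp add: hd_take)
    moreover have "last (take (Suc i) g) = g ! i" using il by (simp add: take_Suc_conv_app_nth)
    ultimately have "gdist G x (g ! i) \<le> length (take (Suc i) g) - 1" by (rule d_le)
    with il show ?thesis by simp
  qed
  have b: "gdist G (g ! i) y \<le> gdist G x y - i"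
  proof -
    have "is_walk G (drop i g)" using is_walk_drop g(1) il by blast
    moreover have "hd (drop i g) = g ! i" using il by (simp add: hd_drop_conv_nth)
    moreover have "last (drop i g) = y" using il g by simp
    ultimately have "gdist G (g ! i) y \<le> length (drop i g) - 1" by (rule d_le)
    with g show ?thesis by simp
  qed
  have "gdist G x y \<le> gdist G x (g ! i) + gdist G (g ! i) y" by (rule d_tri)
  with a b i show "gdist G x (g ! i) = i" "gdist G (g ! i) y = gdist G x y - i" by auto
qed

lemma geo_mem:
  assumes g: "is_walk G g" "hd g = x" "last g = y" "length g = Suc (gdist G x y)"
    and v: "v \<in> set g"
  shows "gdist G x v + gdist G v y = gdist G x y"
proof -
  obtain i where "i < length g" "v = g ! i" using v by (metis in_set_conv_nth)
  then show ?thesis using geo_pos[OF g, of i] g by auto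
qed

lemma ball_Suc: "gball G y (Suc R) \<subseteq> gball G y R \<union> (\<Union>v\<in>gball G y R. {w. G v w})"
proof
  fix z assume z: "z \<in> gball G y (Suc R)"
  show "z \<in> gball G y R \<union> (\<Union>v\<in>gball G y R. {w. G v w})"
  proof (cases "gdist G y z \<le> R")
    case True then show ?thesis by (simp add: gball_def)
  next
    case False
    then have dz: "gdist G y z = Suc R" using z by (simp add: gball_def)
    obtain g where g: "is_walk G g" "hd g = y" "last g = z" "length g = Suc (gdist G y z)"
      using geo by blast
    have "gdist G y (g ! R) = R" "gdist G (g ! R) z = 1" using geo_pos[OF g, of R] dz by auto
    then have "G (g ! R) z" "g ! R \<in> gball G y R" using d_one by (auto simp: gball_def)
    then show ?thesis by blast
  qed
qed

lemma ball_card: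
  assumes N: "\<And>v. finite {w. G v w} \<and> card {w. G v w} \<le> N"
  shows "finite (gball G y R) \<and> card (gball G y R) \<le> (N + 1) ^ R"
proof (induction R)
  case 0
  have "gball G y 0 = {y}" by (auto simp: gball_def d_zero_iff)
  then show ?case by simp
next
  case (Suc R)
  let ?B = "gball G y R"
  have fU: "finite (\<Union>v\<in>?B. {w. G v w})" using Suc N by auto
  have "card (\<Union>v\<in>?B. {w. G v w}) \<le> (\<Sum>v\<in>?B. card {w. G v w})" by (rule card_UN_le) (use Suc in auto)
  also have "\<dots> \<le> card ?B * N" using N sum_bounded_above[of ?B "\<lambda>v. card {w. G v w}" N] by auto
  finally have cU: "card (\<Union>v\<in>?B. {w. G v w}) \<le> card ?B * N" .
  have fin: "finite (gball G y (Suc R))" using finite_subset[OF ball_Suc] fU Suc by blast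
  have "card (gball G y (Suc R)) \<le> card (?B \<union> (\<Union>v\<in>?B. {w. G v w}))"
    by (rule card_mono[OF _ ball_Suc]) (use fU Suc in blast)
  also have "\<dots> \<le> card ?B + card ?B * N" using card_Un_le[of ?B "\<Union>v\<in>?B. {w. G v w}"] cU by linarith
  also have "\<dots> = card ?B * (N + 1)" by simp
  also have "\<dots> \<le> (N + 1) ^ R * (N + 1)" using Suc by (intro mult_right_mono) auto
  also have "\<dots> = (N + 1) ^ Suc R" by simp
  finally show ?case using fin by simp
qed

end

lemma unbounded_far:
  assumes "\<not> bounded_set G Y"
  shows "\<exists>x\<in>Y. \<exists>y\<in>Y. R < gdist G x y"
proof (rule ccontr)
  assume "\<not> ?thesis"
  then have "\<forall>x\<in>Y. \<forall>y\<in>Y. gdist G x y \<le> R" by (auto simp: not_less)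
  then show False using assms unfolding bounded_set_def by blast
qed

lemma cc_chain:
  assumes "coarsely_connected G \<mu> Y" "x \<in> Y" "y \<in> Y"
  obtains xs where "xs \<noteq> []" "hd xs = x" "last xs = y" "set xs \<subseteq> Y"
    "\<And>i. Suc i < length xs \<Longrightarrow> real (gdist G (xs ! i) (xs ! Suc i)) \<le> \<mu>"
  using assms unfolding coarsely_connected_def by blast




lemma narrow_linear:
  assumes symE: "symp E" and connE: "graph_connected E" and lg: "linear_growth E"
  shows "narrow E"
proof -
  interpret cgraph E using symE connE by unfold_locales
  obtain C :: real and y0 where C1: "C \<ge> 1"
    and lgb: "\<And>n::nat. n \<ge> 1 \<Longrightarrow> finite (gball E y0 n) \<and> real (card (gball E y0 n)) \<le> C * real n"
    using lg unfolding linear_growth_def by blast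
  show ?thesis unfolding narrow_def
  proof (intro allI impI)
    fix \<mu> :: real assume mu: "\<mu> \<ge> 1"
    define M' where "M' = nat \<lceil>\<mu>\<rceil>"
    have M'1: "M' \<ge> 1" and muM: "\<mu> \<le> real M'" using mu unfolding M'_def by linarith+
    define L where "L = nat \<lceil>2 * C * real M'\<rceil>"
    have LC: "real L \<ge> 2 * C * real M'" unfolding L_def by linarith
    have "1 * 1 \<le> C * real M'" by (rule mult_mono) (use C1 M'1 in auto)
    then have "2 * C * real M' \<ge> 2" by simp
    then have L1: "L \<ge> 1" using LC by linarith
    show "\<exists>L\<ge>(1::nat). \<forall>Ys :: nat \<Rightarrow> 'a set. (\<forall>i\<le>L. \<not> bounded_set E (Ys i) \<and> coarsely_connected E \<mu> (Ys i)) \<longrightarrow>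
                (\<exists>i\<le>L. \<exists>j\<le>L. i \<noteq> j \<and> Ys i \<inter> Ys j \<noteq> {})"
    proof (rule exI[where x=L], intro conjI allI impI)
      show "1 \<le> L" by (rule L1)
    next
      fix Ys :: "nat \<Rightarrow> 'a set"
      assume H: "\<forall>i\<le>L. \<not> bounded_set E (Ys i) \<and> coarsely_connected E \<mu> (Ys i)"
      show "\<exists>i\<le>L. \<exists>j\<le>L. i \<noteq> j \<and> Ys i \<inter> Ys j \<noteq> {}"
      proof (rule ccontr)
        assume "\<not> ?thesis"
        then have disj: "\<And>i j. i \<le> L \<Longrightarrow> j \<le> L \<Longrightarrow> i \<noteq> j \<Longrightarrow> Ys i \<inter> Ys j = {}" by blast
        have ne: "\<And>i. i \<le> L \<Longrightarrow> Ys i \<noteq> {}"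
          using H unfolding bounded_set_def by fastforce
        define b where "b i = (SOME y. y \<in> Ys i)" for i
        have bY: "\<And>i. i \<le> L \<Longrightarrow> b i \<in> Ys i" unfolding b_def using ne by (simp add: some_in_eq)
        define N0 where "N0 = Max ((\<lambda>i. gdist E y0 (b i)) ` {..L})"
        have bN0: "\<And>i. i \<le> L \<Longrightarrow> gdist E y0 (b i) \<le> N0" unfolding N0_def by auto
        have far: "\<exists>z\<in>Ys i. R < gdist E y0 z" if iL: "i \<le> L" for i R
        proof -
          obtain x y where xy: "x \<in> Ys i" "y \<in> Ys i" "2 * R < gdist E x y"
            using unbounded_far[of E "Ys i" "2 * R"] H iL by blast
          have "gdist E x y \<le> gdist E x y0 + gdist E y0 y" by (rule d_tri)
          then have "R < gdist E y0 x \<or> R < gdist E y0 y" using xy d_sym[of x y0] by linarith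
          then show ?thesis using xy by blast
        qed
        have key: "\<exists>p\<in>Ys i. n < gdist E y0 p \<and> gdist E y0 p \<le> n + M'" if i: "i \<le> L" and n: "N0 \<le> n" for i n
        proof -
          obtain z where z: "z \<in> Ys i" "n < gdist E y0 z" using far[OF i] by blast
          obtain xs where xs: "xs \<noteq> []" "hd xs = b i" "last xs = z" "set xs \<subseteq> Ys i"
            and st: "\<And>j. Suc j < length xs \<Longrightarrow> real (gdist E (xs ! j) (xs ! Suc j)) \<le> \<mu>"
            using cc_chain[of E \<mu> "Ys i" "b i" z] H i bY z by blast
          have "\<not> n < gdist E y0 (hd xs)" using xs bN0[OF i] n by simp
          then obtain j where j: "Suc j < length xs" "\<not> n < gdist E y0 (xs ! j)" "n < gdist E y0 (xs ! Suc j)"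
            using transition[of xs "\<lambda>v. n < gdist E y0 v"] xs z by auto
          have "gdist E y0 (xs ! Suc j) \<le> gdist E y0 (xs ! j) + gdist E (xs ! j) (xs ! Suc j)" by (rule d_tri)
          moreover have "real (gdist E (xs ! j) (xs ! Suc j)) \<le> real M'" using st[OF j(1)] muM by linarith
          ultimately have "gdist E y0 (xs ! Suc j) \<le> n + M'" using j by linarith
          moreover have "xs ! Suc j \<in> Ys i" using j(1) xs(4) nth_mem by blast
          ultimately show ?thesis using j by blast
        qed
        define M where "M = Suc N0"
        have ex: "\<forall>im. \<exists>q. fst im \<le> L \<longrightarrow> q \<in> Ys (fst im) \<and> N0 + snd im * M' < gdist E y0 q \<and> gdist E y0 q \<le> N0 + snd im * M' + M'"
        proof
          fix im :: "nat \<times> nat"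
          show "\<exists>q. fst im \<le> L \<longrightarrow> q \<in> Ys (fst im) \<and> N0 + snd im * M' < gdist E y0 q \<and> gdist E y0 q \<le> N0 + snd im * M' + M'"
            using key[of "fst im" "N0 + snd im * M'"] by auto
        qed
        then obtain p' where p': "\<forall>im. fst im \<le> L \<longrightarrow> p' im \<in> Ys (fst im) \<and> N0 + snd im * M' < gdist E y0 (p' im) \<and> gdist E y0 (p' im) \<le> N0 + snd im * M' + M'"
          using choice[OF ex] by blast
        define p where "p i m = p' (i, m)" for i m
        have p: "\<And>i m. i \<le> L \<Longrightarrow> m < M \<Longrightarrow> p i m \<in> Ys i \<and> N0 + m * M' < gdist E y0 (p i m) \<and> gdist E y0 (p i m) \<le> N0 + m * M' + M'"
          using p' unfolding p_def by auto
        define S where "S = (\<lambda>(i, m). p i m) ` ({..L} \<times> {..<M})"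
        have inj2: "i = i' \<and> m = m'" if a: "i \<in> {..L}" "m \<in> {..<M}" "i' \<in> {..L}" "m' \<in> {..<M}" and eq: "p i m = p i' m'" for i m i' m'
        proof -
          have "i = i'" using disj[of i i'] p[of i m] p[of i' m'] a eq by auto
          moreover have "m = m'"
          proof (rule ccontr)
            assume "m \<noteq> m'"
            then consider "m < m'" | "m' < m" by linarith
            then show False
            proof cases
              case 1
              then have "Suc m * M' \<le> m' * M'" by (intro mult_le_mono1) simp
              then have "N0 + m * M' + M' \<le> N0 + m' * M'" by simp
              then show False using p[of i m] p[of i' m'] a eq by auto
            next
              case 2
              then have "Suc m' * M' \<le> m * M'" by (intro mult_le_mono1) simp
              then have "N0 + m' * M' + M' \<le> N0 + m * M'" by simp
              then show False using p[of i m] p[of i' m'] a eq by auto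
            qed
          qed
          ultimately show "i = i' \<and> m = m'" by simp
        qed
        have inj: "inj_on (\<lambda>(i, m). p i m) ({..L} \<times> {..<M})"
        proof (rule inj_onI)
          fix x y assume "x \<in> {..L} \<times> {..<M}" "y \<in> {..L} \<times> {..<M}"
            "(\<lambda>(i, m). p i m) x = (\<lambda>(i, m). p i m) y"
          then show "x = y" using inj2[of "fst x" "snd x" "fst y" "snd y"]
            by (cases x, cases y) simp
        qed
        have cardS: "card S = Suc L * M" unfolding S_def using card_image[OF inj] by simp
        define n where "n = N0 + M * M'"
        have n1: "n \<ge> 1" unfolding n_def M_def using M'1 by simp
        have Sball: "S \<subseteq> gball E y0 n"
        proof
          fix q assume "q \<in> S"
          then obtain i m where im: "i \<le> L" "m < M" "q = p i m" unfolding S_def by auto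
          have "Suc m * M' \<le> M * M'" using im(2) by (intro mult_le_mono1) simp
          then have "N0 + m * M' + M' \<le> n" unfolding n_def by simp
          then show "q \<in> gball E y0 n" using p[OF im(1,2)] im by (auto simp: gball_def)
        qed
        have "card S \<le> card (gball E y0 n)" using lgb[OF n1] Sball by (intro card_mono) auto
        then have A: "real (Suc L * M) \<le> C * real n" using lgb[OF n1] cardS by linarith
        have "real n \<le> 2 * real M * real M'"
        proof -
          have "M * 1 \<le> M * M'" using M'1 by (intro mult_le_mono2)
          then have "N0 \<le> M * M'" unfolding M_def by simp
          then have "n \<le> 2 * M * M'" unfolding n_def by (simp add: mult.commute)
          then show ?thesis by (metis of_nat_le_iff of_nat_mult of_nat_numeral)
        qed
        then have B: "C * real n \<le> C * (2 * real M * real M')" using C1 by (intro mult_left_mono) auto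
        have "real (Suc L) > 2 * C * real M'" using LC by simp
        then have "real (Suc L) * real M > 2 * C * real M' * real M"
          unfolding M_def by (intro mult_strict_right_mono) auto
        then show False using A B by (simp add: algebra_simps)
      qed
    qed
  qed
qed




locale rtree = cgraph T for T :: "'b \<Rightarrow> 'b \<Rightarrow> bool" +
  fixes rt :: 'b
  assumes irr: "\<And>x. \<not> T x x" and acyc: "\<not> has_cycle T"
begin

definition depth :: "'b \<Rightarrow> nat" where "depth v = gdist T rt v"
definition anc :: "'b \<Rightarrow> 'b \<Rightarrow> bool" where "anc a v \<longleftrightarrow> depth a + gdist T a v = depth v"

lemma edge_lemma:
  assumes xs: "is_walk T xs" "hd xs = u" "last xs = w" and e: "T u w"
    and n1: "(u, w) \<notin> prs xs" and n2: "(w, u) \<notin> prs xs"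
  shows False
proof -
  obtain ys where ys: "is_walk T ys" "hd ys = u" "last ys = w" "distinct ys" "prs ys \<subseteq> prs xs"
    using walk_shorten[OF xs(1)] xs by blast
  have uw: "u \<noteq> w" using irr e by blast
  have ne: "ys \<noteq> []" using ys by auto
  have "length ys \<noteq> 0" using ne by simp
  then have "length ys = 1 \<or> length ys = 2 \<or> length ys \<ge> 3" by linarith
  then consider "length ys = 1" | "length ys = 2" | "length ys \<ge> 3" by blast
  then show False
  proof cases
    case 1
    then obtain z where "ys = [z]" by (cases ys) auto
    then show False using ys uw by simp
  next
    case 2
    then obtain z1 z2 where "ys = [z1, z2]" by (cases ys; cases "tl ys") auto
    then show False using ys n1 by auto
  next
    case 3
    have "T (last ys) (hd ys)" using ys e sym by (simp add: sympD)
    then have "has_cycle T" unfolding has_cycle_def using ys 3 by blast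
    then show False using acyc by simp
  qed
qed

lemma depth_rt[simp]: "depth rt = 0" by (simp add: depth_def)

lemma depth_zero: "depth v = 0 \<Longrightarrow> v = rt"
  unfolding depth_def using d_zero by (metis)

lemma anc_refl: "anc v v" by (simp add: anc_def)
lemma anc_rt: "anc rt v" by (simp add: anc_def depth_def)

lemma anc_depth_le: "anc a v \<Longrightarrow> depth a \<le> depth v"
  unfolding anc_def by linarith

lemma anc_trans: "anc a b \<Longrightarrow> anc b v \<Longrightarrow> anc a v"
proof -
  assume ab: "anc a b" and bv: "anc b v"
  have "gdist T a v \<le> gdist T a b + gdist T b v" by (rule d_tri)
  moreover have "gdist T rt v \<le> gdist T rt a + gdist T a v" by (rule d_tri)
  ultimately show ?thesis using ab bv unfolding anc_def depth_def by linarith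
qed

lemma anc_eq_depth: "anc a b \<Longrightarrow> depth a = depth b \<Longrightarrow> a = b"
  unfolding anc_def using d_zero by simp

lemma geo_anc:
  assumes g: "is_walk T g" "hd g = rt" "last g = v" "length g = Suc (gdist T rt v)"
    and a: "a \<in> set g"
  shows "anc a v"
  using geo_mem[OF g a] unfolding anc_def depth_def by simp

lemma anc_exists:
  assumes "n \<le> depth v" shows "\<exists>a. anc a v \<and> depth a = n"
proof -
  obtain g where g: "is_walk T g" "hd g = rt" "last g = v" "length g = Suc (gdist T rt v)"
    using geo by blast
  have "gdist T rt (g ! n) = n" "gdist T (g ! n) v = gdist T rt v - n"
    using geo_pos[OF g, of n] assms unfolding depth_def by auto
  then show ?thesis using assms unfolding anc_def depth_def by (intro exI[of _ "g ! n"]) auto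
qed

lemma geo_from_anc:
  assumes ay: "anc a y"
    and g: "is_walk T g" "hd g = a" "last g = y" "length g = Suc (gdist T a y)"
    and v: "v \<in> set g"
  shows "depth v = depth a + gdist T a v"
proof -
  have 1: "gdist T a v + gdist T v y = gdist T a y" by (rule geo_mem[OF g v])
  have 2: "depth v \<le> depth a + gdist T a v" unfolding depth_def by (rule d_tri)
  have 3: "depth y \<le> depth v + gdist T v y" unfolding depth_def by (rule d_tri)
  show ?thesis using 1 2 3 ay unfolding anc_def by linarith
qed

lemma sep:
  assumes ay: "anc a y" and ax: "\<not> anc a x"
    and w: "is_walk T w" "hd w = x" "last w = y"
  shows "a \<in> set w"
proof (rule ccontr)
  assume aw: "a \<notin> set w"
  have art: "a \<noteq> rt" using ax anc_rt by blast
  have da: "depth a \<ge> 1" using depth_zero art by (metis less_one not_le)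
  obtain p where p: "anc p a" "depth p = depth a - 1" using anc_exists[of "depth a - 1" a] by auto
  have "gdist T p a = 1" using p da unfolding anc_def by linarith
  then have Tpa: "T p a" by (rule d_one)
  obtain g0 where g0: "is_walk T g0" "hd g0 = p" "last g0 = rt" "length g0 = Suc (gdist T p rt)"
    using geo by blast
  have ag0: "a \<notin> set g0"
  proof
    assume "a \<in> set g0"
    from geo_mem[OF g0 this] have "gdist T a rt \<le> gdist T p rt" by linarith
    then show False using p da unfolding depth_def by (simp add: d_sym)
  qed
  obtain g1 where g1: "is_walk T g1" "hd g1 = rt" "last g1 = x" "length g1 = Suc (gdist T rt x)"
    using geo by blast
  have ag1: "a \<notin> set g1" using geo_anc[OF g1] ax by blast
  obtain g3 where g3: "is_walk T g3" "hd g3 = a" "last g3 = y" "length g3 = Suc (gdist T a y)"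
    using geo by blast
  have ya: "y \<noteq> a" using aw w by (metis last_in_set is_walk_Nil)
  then have day: "gdist T a y \<ge> 1" using d_zero by (metis less_one not_le)
  define g3' where "g3' = tl g3"
  have g3eq: "g3 = a # g3'" unfolding g3'_def using g3 by (cases g3) auto
  have g3'ne: "g3' \<noteq> []" using g3 day g3eq by auto
  have ag3': "a \<notin> set g3'"
  proof
    assume "a \<in> set g3'"
    then obtain i where i: "i < length g3'" "g3' ! i = a" by (metis in_set_conv_nth)
    have "g3 ! Suc i = a" using i g3eq by simp
    moreover have "Suc i \<le> gdist T a y" using i g3eq g3 by simp
    ultimately have "gdist T a a = Suc i" using geo_pos(1)[OF g3, of "Suc i"] by simp
    then show False by simp
  qed
  define c where "c = hd g3'"
  have c1: "c = g3 ! 1" using g3eq g3'ne unfolding c_def by (cases g3') auto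
  have dac: "gdist T a c = 1" using geo_pos(1)[OF g3, of 1] day c1 by simp
  have Tac: "T a c" using d_one[OF dac] .
  have cin: "c \<in> set g3" using c1 g3 day by (metis nth_mem Suc_le_lessD le_imp_less_Suc)
  have dc: "depth c = depth a + 1" using geo_from_anc[OF ay g3 cin] dac by simp
  have wg3': "is_walk T g3'" using is_walk_ConsD[of T a g3'] g3(1) g3eq g3'ne by simp
  define W1 where "W1 = g0 @ tl (g1 @ tl w)"
  have g1ne: "g1 \<noteq> []" "g0 \<noteq> []" "w \<noteq> []" using g1 g0 w by auto
  have wW1a: "is_walk T (g1 @ tl w)" by (rule is_walk_append) (use g1 w in auto)
  have wW1: "is_walk T W1" unfolding W1_def
    by (rule is_walk_append) (use g0 g1 wW1a g1ne in auto)
  have l1: "last (g1 @ tl w) = y" using g1 w g1ne by (simp add: last_append_tl)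
  have "last W1 = last (g1 @ tl w)" unfolding W1_def
    by (rule last_append_tl) (use g0 g1 g1ne in auto)
  then have hW1: "hd W1 = p" "last W1 = y" using g0 g1ne l1 unfolding W1_def by auto
  have sW1: "a \<notin> set W1" unfolding W1_def using ag0 ag1 aw
    set_append_tl[of g0 "g1 @ tl w"] set_append_tl[of g1 w] by auto
  define W' where "W' = W1 @ tl (rev g3')"
  have rne: "rev g3' \<noteq> []" using g3'ne by simp
  have lastg3': "last g3' = y" using g3 g3eq g3'ne by simp
  have wW': "is_walk T W'" unfolding W'_def
    by (rule is_walk_append) (use wW1 hW1 is_walk_rev[OF sym wg3'] lastg3' g3'ne in \<open>auto simp: hd_rev\<close>)
  have W1ne: "W1 \<noteq> []" using wW1 by auto
  have hW': "hd W' = p" "last W' = c" using hW1 W1ne rne lastg3' g3'ne unfolding W'_def c_def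
    by (auto simp: last_append_tl hd_rev last_rev)
  have sW': "a \<notin> set W'" unfolding W'_def using sW1 ag3' set_append_tl[of W1 "rev g3'"] by auto
  define W where "W = W' @ [a]"
  have W'ne: "W' \<noteq> []" using wW' by auto
  have wW: "is_walk T W" unfolding W_def
    using is_walk_append[OF wW', of "[c, a]"] hW' Tac sym by (simp add: sympD)
  have pW: "prs W = insert (c, a) (prs W')" unfolding W_def using prs_snoc[OF W'ne] hW' by simp
  have cp: "c \<noteq> p" using dc p by auto
  have ca: "c \<noteq> a" using dc by auto
  have n1: "(p, a) \<notin> prs W" using pW cp prs_subset[of W'] sW' by auto
  have n2: "(a, p) \<notin> prs W" using pW ca prs_subset[of W'] sW' by auto
  show False using edge_lemma[OF wW _ _ Tpa n1 n2] hW' W'ne unfolding W_def by simp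
qed

lemma sep_dist:
  assumes "anc a y" "\<not> anc a x"
  shows "gdist T x y = gdist T x a + gdist T a y"
proof -
  obtain g where g: "is_walk T g" "hd g = x" "last g = y" "length g = Suc (gdist T x y)"
    using geo by blast
  have "a \<in> set g" using sep[OF assms g(1-3)] .
  then show ?thesis using geo_mem[OF g] by simp
qed

lemma anc_unique: "anc a v \<Longrightarrow> anc b v \<Longrightarrow> depth a = depth b \<Longrightarrow> a = b"
proof (rule ccontr)
  assume av: "anc a v" and bv: "anc b v" and d: "depth a = depth b" and ne: "a \<noteq> b"
  have "\<not> anc a b" using anc_eq_depth d ne by blast
  then have "gdist T b v = gdist T b a + gdist T a v" using sep_dist[OF av] by blast
  moreover have "gdist T a v = gdist T b v" using av bv d unfolding anc_def by linarith
  ultimately have "gdist T b a = 0" by linarith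
  then show False using d_zero ne by blast
qed

lemma anc_chain: "anc a v \<Longrightarrow> anc b v \<Longrightarrow> depth a \<le> depth b \<Longrightarrow> anc a b"
proof -
  assume av: "anc a v" and bv: "anc b v" and d: "depth a \<le> depth b"
  obtain a' where a': "anc a' b" "depth a' = depth a" using anc_exists[OF d] by blast
  have "anc a' v" using anc_trans[OF a'(1) bv] .
  then have "a' = a" using anc_unique av a'(2) by blast
  then show ?thesis using a' by simp
qed

end




lemma end_equiv_refl:
  fixes G :: "'a \<Rightarrow> 'a \<Rightarrow> bool"
  assumes r: "is_ray G r" shows "end_equiv G r r"
  unfolding end_equiv_def
proof (intro allI impI)
  fix S :: "'a set" assume fS: "finite S"
  have "finite (r -` S)" using fS r finite_vimageI unfolding is_ray_def by blast
  then obtain n where n: "\<forall>k\<in>r -` S. k < n" using finite_nat_set_iff_bounded by blast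
  have "\<forall>k\<ge>n. r k \<notin> S"
  proof (intro allI impI)
    fix k assume kn: "n \<le> k"
    show "r k \<notin> S"
    proof
      assume "r k \<in> S"
      then have "k < n" using n by auto
      then show False using kn by simp
    qed
  qed
  then show "\<exists>n. (\<forall>k\<ge>n. r k \<notin> S \<and> r k \<notin> S) \<and>
             (\<exists>xs. is_walk G xs \<and> hd xs = r n \<and> last xs = r n \<and> set xs \<inter> S = {})"
    by (intro exI[of _ n] conjI exI[of _ "[r n]"]) auto
qed

locale bgtree = rtree +
  fixes s0 :: nat
  assumes fin: "\<And>r. finite {a. depth a = r \<and> (\<exists>v. anc a v \<and> r + s0 \<le> depth v)}"
begin

definition deep :: "'a \<Rightarrow> bool" where "deep a \<longleftrightarrow> (\<forall>D. \<exists>v. anc a v \<and> D \<le> depth v)"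

definition bnd :: "'a \<Rightarrow> nat" where "bnd c = (SOME B. \<forall>v. anc c v \<longrightarrow> depth v < B)"

lemma bnd: "\<not> deep c \<Longrightarrow> anc c v \<Longrightarrow> depth v < bnd c"
proof -
  assume "\<not> deep c" "anc c v"
  then have "\<exists>B. \<forall>v. anc c v \<longrightarrow> depth v < B" unfolding deep_def by (meson not_le)
  then have "\<forall>v. anc c v \<longrightarrow> depth v < bnd c" unfolding bnd_def by (rule someI_ex)
  then show ?thesis using \<open>anc c v\<close> by blast
qed

lemma deep_child: "deep a \<Longrightarrow> \<exists>c. anc a c \<and> depth c = Suc (depth a) \<and> deep c"
proof (rule ccontr)
  assume da: "deep a" and nc: "\<not> (\<exists>c. anc a c \<and> depth c = Suc (depth a) \<and> deep c)"
  define F where "F = {c. depth c = Suc (depth a) \<and> (\<exists>v. anc c v \<and> Suc (depth a) + s0 \<le> depth v)}"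
  have fF: "finite F" unfolding F_def by (rule fin)
  define B where "B = Suc (depth a) + s0 + (\<Sum>c\<in>F. bnd c)"
  obtain v where v: "anc a v" "B \<le> depth v" using da unfolding deep_def by blast
  have "Suc (depth a) \<le> depth v" using v unfolding B_def by linarith
  then obtain c where c: "anc c v" "depth c = Suc (depth a)" using anc_exists by blast
  have ac: "anc a c" using anc_chain[OF v(1) c(1)] c(2) by simp
  have cF: "c \<in> F" unfolding F_def using c v B_def by auto
  have "bnd c \<le> (\<Sum>c\<in>F. bnd c)" using member_le_sum[OF cF, of bnd] fF by simp
  moreover have "depth v < bnd c" using bnd[OF _ c(1)] nc ac c(2) by blast
  ultimately show False using v(2) unfolding B_def by linarith
qed

definition nxt :: "'a \<Rightarrow> 'a" where
  "nxt c = (SOME c'. anc c c' \<and> depth c' = Suc (depth c) \<and> deep c')"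

lemma nxt: "deep c \<Longrightarrow> anc c (nxt c) \<and> depth (nxt c) = Suc (depth c) \<and> deep (nxt c)"
  unfolding nxt_def by (rule someI_ex) (rule deep_child)

definition ray :: "'a \<Rightarrow> nat \<Rightarrow> 'a" where "ray a n = (nxt ^^ n) a"

lemma ray_props: "deep a \<Longrightarrow> deep (ray a n) \<and> depth (ray a n) = depth a + n \<and> anc a (ray a n)"
proof (induction n)
  case 0 then show ?case by (simp add: ray_def anc_refl)
next
  case (Suc n)
  then have "deep (ray a n)" "depth (ray a n) = depth a + n" "anc a (ray a n)" by auto
  moreover have "ray a (Suc n) = nxt (ray a n)" by (simp add: ray_def)
  ultimately show ?case using nxt[of "ray a n"] anc_trans by auto
qed

lemma ray_step: "deep a \<Longrightarrow> T (ray a n) (ray a (Suc n))"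
proof -
  assume da: "deep a"
  have r: "ray a (Suc n) = nxt (ray a n)" by (simp add: ray_def)
  have "deep (ray a n)" using ray_props[OF da] by blast
  then have "anc (ray a n) (ray a (Suc n))" "depth (ray a (Suc n)) = Suc (depth (ray a n))"
    using nxt r by auto
  then have "gdist T (ray a n) (ray a (Suc n)) = 1" unfolding anc_def by linarith
  then show ?thesis by (rule d_one)
qed

lemma ray_is_ray: "deep a \<Longrightarrow> is_ray T (ray a)"
  unfolding is_ray_def
proof (intro conjI allI)
  assume da: "deep a"
  show "inj (ray a)"
  proof (rule injI)
    fix m n assume "ray a m = ray a n"
    then have "depth (ray a m) = depth (ray a n)" by simp
    then show "m = n" using ray_props[OF da, of m] ray_props[OF da, of n] by simp
  qed
  fix i show "T (ray a i) (ray a (Suc i))" using ray_step[OF da] .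
qed

lemma not_equiv:
  assumes da: "deep a" and db: "deep b" and ab: "a \<noteq> b" and d: "depth a = depth b"
  shows "\<not> end_equiv T (ray a) (ray b)"
proof
  assume ee: "end_equiv T (ray a) (ray b)"
  have fab: "finite {a, b}" by simp
  have "\<exists>n. (\<forall>k\<ge>n. ray a k \<notin> {a, b} \<and> ray b k \<notin> {a, b}) \<and>
      (\<exists>xs. is_walk T xs \<and> hd xs = ray a n \<and> last xs = ray b n \<and> set xs \<inter> {a, b} = {})"
    using ee[unfolded end_equiv_def, rule_format, OF fab] .
  then obtain n xs where xs: "is_walk T xs" "hd xs = ray a n" "last xs = ray b n" "set xs \<inter> {a, b} = {}"
    by blast
  have aa: "anc a (ray a n)" using ray_props[OF da] by blast
  have bb: "anc b (ray b n)" using ray_props[OF db] by blast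
  have nab: "\<not> anc a (ray b n)" using anc_unique[OF _ bb d] ab by blast
  have ne: "xs \<noteq> []" using xs by auto
  have "a \<in> set (rev xs)"
    by (rule sep[OF aa nab is_walk_rev[OF sym xs(1)]]) (use xs ne in \<open>auto simp: hd_rev last_rev\<close>)
  then show False using xs(4) by auto
qed

lemma deep_level_bound:
  assumes fe: "finite (graph_ends T)"
  shows "finite {a. depth a = r \<and> deep a} \<and> card {a. depth a = r \<and> deep a} \<le> card (graph_ends T)"
proof -
  let ?U = "{a. depth a = r \<and> deep a}"
  define R where "R = {(r, s). is_ray T r \<and> is_ray T s \<and> end_equiv T r s}"
  define cls where "cls a = R `` {ray a}" for a
  have img: "cls ` ?U \<subseteq> graph_ends T"
  proof
    fix e assume "e \<in> cls ` ?U"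
    then obtain a where a: "deep a" "e = cls a" by auto
    have "R `` {ray a} \<in> {r. is_ray T r} // R" by (rule quotientI) (simp add: ray_is_ray[OF a(1)])
    then show "e \<in> graph_ends T" unfolding graph_ends_def a(2) cls_def R_def .
  qed
  have inj: "inj_on cls ?U"
  proof (rule inj_onI)
    fix a b assume a: "a \<in> ?U" and b: "b \<in> ?U" and eq: "cls a = cls b"
    have "ray a \<in> cls a" unfolding cls_def R_def using ray_is_ray end_equiv_refl a by auto
    then have "ray a \<in> cls b" using eq by simp
    then have "end_equiv T (ray b) (ray a)" unfolding cls_def R_def by auto
    then show "a = b" using not_equiv[of b a] a b by auto
  qed
  have "finite ?U" using inj img fe inj_on_finite by blast
  moreover have "card ?U \<le> card (graph_ends T)" using card_inj_on_le[OF inj img fe] .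
  ultimately show ?thesis by blast
qed

lemma level_D: "\<exists>D. \<forall>a v. depth a = r \<longrightarrow> anc a v \<longrightarrow> r + D \<le> depth v \<longrightarrow> deep a"
proof -
  define F where "F = {a. depth a = r \<and> (\<exists>v. anc a v \<and> r + s0 \<le> depth v)}"
  have fF: "finite F" unfolding F_def by (rule fin)
  define D where "D = s0 + (\<Sum>c\<in>F. bnd c)"
  have "deep a" if a: "depth a = r" "anc a v" "r + D \<le> depth v" for a v
  proof (rule ccontr)
    assume nd: "\<not> deep a"
    have aF: "a \<in> F" unfolding F_def using a D_def by auto
    have "bnd a \<le> (\<Sum>c\<in>F. bnd c)" using member_le_sum[OF aF, of bnd] fF by simp
    moreover have "depth v < bnd a" using bnd[OF nd a(2)] .
    ultimately show False using a(3) unfolding D_def by linarith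
  qed
  then show ?thesis by blast
qed

end




lemma narrow_tree:
  fixes E :: "'a \<Rightarrow> 'a \<Rightarrow> bool" and T :: "'b \<Rightarrow> 'b \<Rightarrow> bool"
  assumes symE: "symp E" and connE: "graph_connected E" and ulf: "unif_locally_finite E"
    and tree: "is_tree T" and fe: "finite (graph_ends T)" and qi: "quasi_isometric E T"
  shows "narrow E"
proof -
  interpret E: cgraph E using symE connE by unfold_locales
  obtain N where N: "\<And>v. finite {w. E v w} \<and> card {w. E v w} \<le> N"
    using ulf unfolding unif_locally_finite_def by blast
  have ballE: "\<And>y R. finite (gball E y R) \<and> card (gball E y R) \<le> (N + 1) ^ R"
    using E.ball_card N by blast
  obtain f :: "'a \<Rightarrow> 'b" and K C :: real where K1: "K \<ge> 1" and C0: "C \<ge> 0"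
    and lo: "\<And>x y. real (gdist E x y) / K - C \<le> real (gdist T (f x) (f y))"
    and up: "\<And>x y. real (gdist T (f x) (f y)) \<le> K * real (gdist E x y) + C"
    and cs: "\<And>t. \<exists>x. real (gdist T t (f x)) \<le> C"
    using qi unfolding quasi_isometric_def by blast
  have loE: "real (gdist E x y) \<le> K * (real (gdist T (f x) (f y)) + C)" for x y
  proof -
    have "real (gdist E x y) / K \<le> real (gdist T (f x) (f y)) + C" using lo[of x y] by linarith
    then show ?thesis using K1 by (simp add: pos_divide_le_eq mult.commute)
  qed
  have Tt: "symp T" "\<And>x. \<not> T x x" "graph_connected T" "\<not> has_cycle T"
    using tree unfolding is_tree_def by auto
  define rt where "rt = f undefined"
  interpret Tr: rtree T rt using Tt by unfold_locales auto
  define s0 :: nat where "s0 = nat \<lceil>2 * C\<rceil> + 1"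
  have s0C: "real s0 > 2 * C" unfolding s0_def by linarith
  have BG: "finite W" if Wd: "\<forall>t\<in>W. Tr.depth t \<le> R" and Wp: "\<forall>t\<in>W. \<forall>t'\<in>W. t \<noteq> t' \<longrightarrow> 2 * C < real (gdist T t t')"
    for W R
  proof (cases "W = {}")
    case True then show ?thesis by simp
  next
    case False
    then obtain t0 where t0: "t0 \<in> W" by blast
    define g where "g t = (SOME x. real (gdist T t (f x)) \<le> C)" for t
    have g: "real (gdist T t (f (g t))) \<le> C" for t unfolding g_def by (rule someI_ex) (rule cs)
    have inj: "inj_on g W"
    proof (rule inj_onI)
      fix t t' assume tW: "t \<in> W" "t' \<in> W" and eq: "g t = g t'"
      have "gdist T t t' \<le> gdist T t (f (g t)) + gdist T (f (g t)) t'" by (rule Tr.d_tri)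
      moreover have "gdist T (f (g t)) t' = gdist T t' (f (g t'))" using eq Tr.d_sym by simp
      ultimately have "real (gdist T t t') \<le> 2 * C" using g[of t] g[of t'] by linarith
      then show "t = t'" using Wp tW by force
    qed
    define R' where "R' = nat \<lceil>K * (2 * real R + 3 * C)\<rceil>"
    have sub: "g ` W \<subseteq> gball E (g t0) R'"
    proof
      fix x assume "x \<in> g ` W"
      then obtain t where t: "t \<in> W" "x = g t" by blast
      have "gdist T (f (g t0)) (f (g t)) \<le> gdist T (f (g t0)) t0 + gdist T t0 (f (g t))" by (rule Tr.d_tri)
      moreover have "gdist T t0 (f (g t)) \<le> gdist T t0 rt + gdist T rt (f (g t))" by (rule Tr.d_tri)
      moreover have "gdist T rt (f (g t)) \<le> gdist T rt t + gdist T t (f (g t))" by (rule Tr.d_tri)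
      moreover have "gdist T (f (g t0)) t0 = gdist T t0 (f (g t0))" by (rule Tr.d_sym)
      moreover have "gdist T t0 rt = Tr.depth t0" unfolding Tr.depth_def by (rule Tr.d_sym)
      moreover have "gdist T rt t = Tr.depth t" unfolding Tr.depth_def ..
      ultimately have "real (gdist T (f (g t0)) (f (g t))) \<le> 2 * real R + 2 * C"
        using g[of t] g[of t0] Wd t t0 by (smt (verit) of_nat_add of_nat_le_iff)
      then have "K * (real (gdist T (f (g t0)) (f (g t))) + C) \<le> K * (2 * real R + 3 * C)"
        using K1 by (intro mult_left_mono) auto
      then have "real (gdist E (g t0) (g t)) \<le> K * (2 * real R + 3 * C)" using loE[of "g t0" "g t"] by linarith
      then have "gdist E (g t0) (g t) \<le> R'" unfolding R'_def by linarith
      then show "x \<in> gball E (g t0) R'" using t by (simp add: gball_def)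
    qed
    have "finite (g ` W)" using finite_subset[OF sub] ballE by blast
    then show ?thesis using inj finite_imageD by blast
  qed
  have finT: "finite {a. Tr.depth a = r \<and> (\<exists>v. Tr.anc a v \<and> r + s0 \<le> Tr.depth v)}" for r
  proof -
    let ?A = "{a. Tr.depth a = r \<and> (\<exists>v. Tr.anc a v \<and> r + s0 \<le> Tr.depth v)}"
    have ex: "\<exists>w. Tr.anc a w \<and> Tr.depth w = r + s0" if "a \<in> ?A" for a
    proof -
      from that obtain v where a: "Tr.depth a = r" "Tr.anc a v" "r + s0 \<le> Tr.depth v" by blast
      obtain w where w: "Tr.anc w v" "Tr.depth w = r + s0" using Tr.anc_exists[OF a(3)] by blast
      have "Tr.anc a w" using Tr.anc_chain[OF a(2) w(1)] a(1) w(2) by simp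
      then show ?thesis using w by blast
    qed
    define wf where "wf a = (SOME w. Tr.anc a w \<and> Tr.depth w = r + s0)" for a
    have wf: "Tr.anc a (wf a) \<and> Tr.depth (wf a) = r + s0" if "a \<in> ?A" for a
      unfolding wf_def by (rule someI_ex) (rule ex[OF that])
    have inj: "inj_on wf ?A"
    proof (rule inj_onI)
      fix a b assume a: "a \<in> ?A" and b: "b \<in> ?A" and eq: "wf a = wf b"
      then show "a = b" using wf[OF a] wf[OF b] Tr.anc_unique[of a "wf a" b] by auto
    qed
    have "finite (wf ` ?A)"
    proof (rule BG)
      show "\<forall>t\<in>wf ` ?A. Tr.depth t \<le> r + s0" using wf by auto
      show "\<forall>t\<in>wf ` ?A. \<forall>t'\<in>wf ` ?A. t \<noteq> t' \<longrightarrow> 2 * C < real (gdist T t t')"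
      proof (intro ballI impI)
        fix t t' assume t: "t \<in> wf ` ?A" and t': "t' \<in> wf ` ?A" and ne: "t \<noteq> t'"
        obtain a where a: "a \<in> ?A" "t = wf a" using t by blast
        obtain b where b: "b \<in> ?A" "t' = wf b" using t' by blast
        have ab: "a \<noteq> b" using a b ne by blast
        have nab: "\<not> Tr.anc a t'" using Tr.anc_unique[of a t' b] wf[OF b(1)] a b ab by auto
        have "gdist T t' t = gdist T t' a + gdist T a t" using Tr.sep_dist[OF _ nab] wf[OF a(1)] a by simp
        moreover have "Tr.depth a + gdist T a t = Tr.depth t" using wf[OF a(1)] a unfolding Tr.anc_def by simp
        ultimately have "s0 \<le> gdist T t t'" using wf[OF a(1)] a Tr.d_sym[of t t'] by simp
        then show "2 * C < real (gdist T t t')" using s0C by linarith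
      qed
    qed
    then show ?thesis using inj finite_imageD by blast
  qed
  interpret Tb: bgtree T rt s0 by unfold_locales (rule finT)
  define k where "k = card (graph_ends T)"
  show "narrow E" unfolding narrow_def
  proof (intro allI impI)
    fix \<mu> :: real assume mu: "\<mu> \<ge> 1"
    define \<nu> where "\<nu> = K * \<mu> + C"
    define R' where "R' = nat \<lceil>K * (2 * \<nu> + C)\<rceil>"
    define M where "M = (N + 1) ^ R'"
    define L where "L = max 1 (k * M)"
    show "\<exists>L\<ge>(1::nat). \<forall>Ys :: nat \<Rightarrow> 'a set. (\<forall>i\<le>L. \<not> bounded_set E (Ys i) \<and> coarsely_connected E \<mu> (Ys i)) \<longrightarrow>
                (\<exists>i\<le>L. \<exists>j\<le>L. i \<noteq> j \<and> Ys i \<inter> Ys j \<noteq> {})"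
    proof (rule exI[where x=L], intro conjI allI impI)
      show "1 \<le> L" unfolding L_def by simp
    next
      fix Ys :: "nat \<Rightarrow> 'a set"
      assume H: "\<forall>i\<le>L. \<not> bounded_set E (Ys i) \<and> coarsely_connected E \<mu> (Ys i)"
      show "\<exists>i\<le>L. \<exists>j\<le>L. i \<noteq> j \<and> Ys i \<inter> Ys j \<noteq> {}"
      proof (rule ccontr)
        assume "\<not> ?thesis"
        then have disj: "\<And>i j. i \<le> L \<Longrightarrow> j \<le> L \<Longrightarrow> i \<noteq> j \<Longrightarrow> Ys i \<inter> Ys j = {}" by blast
        have ne: "\<And>i. i \<le> L \<Longrightarrow> Ys i \<noteq> {}"
          using H unfolding bounded_set_def by fastforce
        define b where "b i = (SOME y. y \<in> Ys i)" for i
        have bY: "\<And>i. i \<le> L \<Longrightarrow> b i \<in> Ys i" unfolding b_def using ne by (simp add: some_in_eq)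
        define r where "r = Suc (Max ((\<lambda>i. Tr.depth (f (b i))) ` {..L}))"
        have br: "\<And>i. i \<le> L \<Longrightarrow> Tr.depth (f (b i)) < r"
          unfolding r_def by (simp add: le_imp_less_Suc)
        obtain D where D: "\<And>a v. Tr.depth a = r \<Longrightarrow> Tr.anc a v \<Longrightarrow> r + D \<le> Tr.depth v \<Longrightarrow> Tb.deep a"
          using Tb.level_D[of r] by blast
        have far: "\<exists>z\<in>Ys i. r + D \<le> Tr.depth (f z)" if iL: "i \<le> L" for i
        proof -
          define R0 where "R0 = nat \<lceil>K * (2 * real (r + D) + C)\<rceil>"
          obtain x y where xy: "x \<in> Ys i" "y \<in> Ys i" "R0 < gdist E x y"
            using unbounded_far[of E "Ys i" R0] H iL by blast
          have "K * (2 * real (r + D) + C) < real (gdist E x y)" using xy(3) unfolding R0_def by linarith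
          then have "2 * real (r + D) + C < real (gdist E x y) / K" using K1 by (simp add: pos_less_divide_eq mult.commute)
          then have A: "2 * real (r + D) < real (gdist T (f x) (f y))" using lo[of x y] by linarith
          have "gdist T (f x) (f y) \<le> gdist T (f x) rt + gdist T rt (f y)" by (rule Tr.d_tri)
          moreover have "gdist T (f x) rt = Tr.depth (f x)" unfolding Tr.depth_def by (rule Tr.d_sym)
          moreover have "gdist T rt (f y) = Tr.depth (f y)" unfolding Tr.depth_def ..
          ultimately have "2 * (r + D) < Tr.depth (f x) + Tr.depth (f y)" using A by linarith
          then have "r + D \<le> Tr.depth (f x) \<or> r + D \<le> Tr.depth (f y)" by presburger
          then show ?thesis using xy by blast
        qed
        have key: "\<exists>y\<in>Ys i. \<exists>a. Tr.depth a = r \<and> Tb.deep a \<and> real (gdist T (f y) a) \<le> \<nu>" if iL: "i \<le> L" for i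
        proof -
          obtain z where z: "z \<in> Ys i" "r + D \<le> Tr.depth (f z)" using far[OF iL] by blast
          obtain a where a: "Tr.anc a (f z)" "Tr.depth a = r" using Tr.anc_exists[of r "f z"] z by auto
          have da: "Tb.deep a" using D[OF a(2) a(1) z(2)] .
          obtain xs where xs: "xs \<noteq> []" "hd xs = b i" "last xs = z" "set xs \<subseteq> Ys i"
            and st: "\<And>j. Suc j < length xs \<Longrightarrow> real (gdist E (xs ! j) (xs ! Suc j)) \<le> \<mu>"
            using cc_chain[of E \<mu> "Ys i" "b i" z] H iL bY z by blast
          have "\<not> Tr.anc a (f (hd xs))" using xs br[OF iL] Tr.anc_depth_le a(2) by fastforce
          then obtain j where j: "Suc j < length xs" "\<not> Tr.anc a (f (xs ! j))" "Tr.anc a (f (xs ! Suc j))"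
            using transition[of xs "\<lambda>v. Tr.anc a (f v)"] xs a by auto
          have "gdist T (f (xs ! j)) (f (xs ! Suc j)) = gdist T (f (xs ! j)) a + gdist T a (f (xs ! Suc j))"
            using Tr.sep_dist[OF j(3) j(2)] .
          then have "gdist T a (f (xs ! Suc j)) \<le> gdist T (f (xs ! j)) (f (xs ! Suc j))" by linarith
          moreover have "real (gdist T (f (xs ! j)) (f (xs ! Suc j))) \<le> K * \<mu> + C"
          proof -
            have "K * real (gdist E (xs ! j) (xs ! Suc j)) \<le> K * \<mu>" using st[OF j(1)] K1 by (intro mult_left_mono) auto
            then show ?thesis using up[of "xs ! j" "xs ! Suc j"] by linarith
          qed
          ultimately have "real (gdist T (f (xs ! Suc j)) a) \<le> \<nu>" unfolding \<nu>_def using Tr.d_sym[of a] by simp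
          moreover have "xs ! Suc j \<in> Ys i" using j(1) xs(4) nth_mem by blast
          ultimately show ?thesis using a(2) da by blast
        qed
        have ex: "\<forall>i. \<exists>y. i \<le> L \<longrightarrow> y \<in> Ys i \<and> (\<exists>a. Tr.depth a = r \<and> Tb.deep a \<and> real (gdist T (f y) a) \<le> \<nu>)"
          using key by blast
        then obtain y where y: "\<And>i. i \<le> L \<Longrightarrow> y i \<in> Ys i \<and> (\<exists>a. Tr.depth a = r \<and> Tb.deep a \<and> real (gdist T (f (y i)) a) \<le> \<nu>)"
          using choice[OF ex] by blast
        define Y where "Y = y ` {..L}"
        have injy: "inj_on y {..L}"
        proof (rule inj_onI)
          fix i j assume "i \<in> {..L}" "j \<in> {..L}" "y i = y j"
          then show "i = j" using y[of i] y[of j] disj[of i j] by auto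
        qed
        have cY: "card Y = Suc L" unfolding Y_def using card_image[OF injy] by simp
        let ?U = "{a. Tr.depth a = r \<and> Tb.deep a}"
        have U: "finite ?U" "card ?U \<le> k" using Tb.deep_level_bound[OF fe, of r] unfolding k_def by auto
        define Q where "Q a = {x \<in> Y. real (gdist T (f x) a) \<le> \<nu>}" for a
        have YQ: "Y \<subseteq> (\<Union>a\<in>?U. Q a)"
        proof
          fix x assume "x \<in> Y"
          then obtain i where i: "i \<le> L" "x = y i" unfolding Y_def by auto
          then obtain a where "Tr.depth a = r" "Tb.deep a" "real (gdist T (f x) a) \<le> \<nu>" using y by blast
          then show "x \<in> (\<Union>a\<in>?U. Q a)" unfolding Q_def using \<open>x \<in> Y\<close> by blast
        qed
        have cQ: "card (Q a) \<le> M" for a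
        proof (cases "Q a = {}")
          case True then show ?thesis by simp
        next
          case False
          then obtain x0 where x0: "x0 \<in> Q a" by blast
          have "Q a \<subseteq> gball E x0 R'"
          proof
            fix x assume x: "x \<in> Q a"
            have "gdist T (f x0) (f x) \<le> gdist T (f x0) a + gdist T a (f x)" by (rule Tr.d_tri)
            moreover have "gdist T a (f x) = gdist T (f x) a" by (rule Tr.d_sym)
            ultimately have "real (gdist T (f x0) (f x)) \<le> 2 * \<nu>" using x x0 unfolding Q_def by auto
            then have "K * (real (gdist T (f x0) (f x)) + C) \<le> K * (2 * \<nu> + C)"
              using K1 by (intro mult_left_mono) auto
            then have "real (gdist E x0 x) \<le> K * (2 * \<nu> + C)" using loE[of x0 x] by linarith
            then have "gdist E x0 x \<le> R'" unfolding R'_def by linarith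
            then show "x \<in> gball E x0 R'" by (simp add: gball_def)
          qed
          then have "card (Q a) \<le> card (gball E x0 R')" using ballE by (intro card_mono) auto
          then show ?thesis using ballE[of x0 R'] unfolding M_def by linarith
        qed
        have fY: "finite Y" unfolding Y_def by simp
        have "card Y \<le> card (\<Union>a\<in>?U. Q a)"
          using YQ U(1) by (intro card_mono) (auto simp: Q_def intro: finite_subset[OF _ fY])
        also have "\<dots> \<le> (\<Sum>a\<in>?U. card (Q a))" by (rule card_UN_le[OF U(1)])
        also have "\<dots> \<le> card ?U * M" using sum_bounded_above[of ?U "\<lambda>a. card (Q a)" M] cQ by auto
        also have "\<dots> \<le> k * M" using U(2) by (intro mult_le_mono1)
        also have "\<dots> \<le> L" unfolding L_def by simp
        finally show False using cY by simp
      qed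
    qed
  qed
qed



theorem mainTheorem7:
  fixes E :: "'a \<Rightarrow> 'a \<Rightarrow> bool"
  assumes "symp E"
    and "graph_connected E"
    and "graph_unbounded E"
    and "linear_growth E \<or>
         (unif_locally_finite E \<and>
          (\<exists>T :: 'b \<Rightarrow> 'b \<Rightarrow> bool. is_tree T \<and> finite (graph_ends T) \<and> quasi_isometric E T))"
  shows "narrow E"
proof -
  from assms(4) show ?thesis
  proof
    assume "linear_growth E"
    then show ?thesis using narrow_linear assms(1,2) by blast
  next
    assume "unif_locally_finite E \<and>
          (\<exists>T :: 'b \<Rightarrow> 'b \<Rightarrow> bool. is_tree T \<and> finite (graph_ends T) \<and> quasi_isometric E T)"
    then obtain T :: "'b \<Rightarrow> 'b \<Rightarrow> bool" where "unif_locally_finite E" "is_tree T"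
      "finite (graph_ends T)" "quasi_isometric E T" by blast
    then show ?thesis using narrow_tree[OF assms(1,2)] by blast
  qed
qed

end
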